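(* There is an absolute constant $\delta>0$ such that the following holds (for $c_0$ a sufficiently large constant, $n$ sufficiently large and $\epsilon\in[c_0/\sqrt n,1)$). With probability at least $0.01$ over $\mathbf A,\mathbf T,\mathbf b$ (drawn as in $\mathcal D_{\mathrm{yes}}$ / $\mathcal D_{\mathrm{no}}$), the number of $x\in\{0,1\}^{\mathbf C}$ such that $S_{\mathbf T}(x)=\{\ell\}$ for some $\ell$ with $\mathbf b_\ell=1$ and $|x|\in[m/2,m/2+0.05\epsilon\sqrt m]$ is at least $\delta\epsilon\cdot 2^m$. Symmetrically, with probability at least $0.01$, the number of such $x$ with $\mathbf b_\ell=0$ instead is at least $\delta\epsilon\cdot 2^m$.
   Context: Parameters: $a=\sqrt n/\epsilon$, $m=n-a$ (assumed integers), $L=0.1\cdot 2^{\sqrt m/\epsilon}$. $\mathbf A\subseteq[n]$ is a uniformly random set of size $a$, $\mathbf C=[n]\setminus\mathbf A$; $\mathbf T=(\mathbf T_1,\dots,\mathbf T_L)\sim\mathsf{Talagrand}(m,\epsilon)$ on $\mathbf C$, meaning each $\mathbf T_\ell\subseteq\mathbf C$ is formed independently by $\sqrt m/\epsilon$ independent uniform draws from $\mathbf C$ with replacement; $\mathbf b\in\{0,1\}^L$ is uniform and independent. For $y\in\{0,1\}^{\mathbf C}$, $S_{\mathbf T}(y)=\{\ell\in[L]: y_j=1\ \forall j\in\mathbf T_\ell\}$, and $|y|$ is the Hamming weight. *)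

theory Defs
  imports "HOL-Probability.Probability"
begin

text \<open>Ground set [n] is rendered as {..<n}. A string y in {0,1}^C is rendered as the
subset Y of C of coordinates equal to 1; then |y| = card Y.
The L sets T_1..T_L are indexed by {..<L}; each T_l is given as the list of its
k = sqrt m / eps independent uniform draws from C (with replacement), so
Talagrand(m,eps) on C is the uniform distribution on L-tuples of length-k lists
over C (uniform on a product = independent uniform coordinates).\<close>

definition talagrand_pmf :: "nat set \<Rightarrow> nat \<Rightarrow> nat \<Rightarrow> (nat \<Rightarrow> nat list) pmf" where
  "talagrand_pmf C k L = pmf_of_set (PiE {..<L} (\<lambda>_. {xs. set xs \<subseteq> C \<and> length xs = k}))"

definition S_T :: "(nat \<Rightarrow> nat list) \<Rightarrow> nat \<Rightarrow> nat set \<Rightarrow> nat set" where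
  "S_T T L Y = {l \<in> {..<L}. set (T l) \<subseteq> Y}"

definition ATb_pmf :: "nat \<Rightarrow> nat \<Rightarrow> nat \<Rightarrow> nat \<Rightarrow>
    (nat set \<times> (nat \<Rightarrow> nat list) \<times> (nat \<Rightarrow> bool)) pmf" where
  "ATb_pmf n a k L =
     do { A \<leftarrow> pmf_of_set {A. A \<subseteq> {..<n} \<and> card A = a};
          T \<leftarrow> talagrand_pmf ({..<n} - A) k L;
          b \<leftarrow> pmf_of_set (PiE {..<L} (\<lambda>_. UNIV :: bool set));
          return_pmf (A, T, b) }"

definition good_count ::
  "nat \<Rightarrow> nat \<Rightarrow> real \<Rightarrow> nat \<Rightarrow> nat set \<Rightarrow> (nat \<Rightarrow> nat list) \<Rightarrow> (nat \<Rightarrow> bool) \<Rightarrow> bool \<Rightarrow> nat" where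
  "good_count n m eps L A T b beta =
     card {Y. Y \<subseteq> {..<n} - A \<and> (\<exists>l. S_T T L Y = {l} \<and> b l = beta)
            \<and> real m / 2 \<le> real (card Y)
            \<and> real (card Y) \<le> real m / 2 + 0.05 * eps * sqrt (real m)}"

end

theory Submission
  imports Defs
begin

lemma ring1: "(1 - (a::real)) * (1 - b) = 1 - (a + b) + a * b" by (simp add: algebra_simps)

lemma binom_step: "Suc k * (n choose Suc k) = (n - k) * (n choose k)"
  by (metis binomial_absorption binomial_absorb_comp)

lemma central_even_rec: "Suc r * (2 * Suc r choose Suc r) = 2 * (2*r+1) * (2*r choose r)"
proof -
  have e1: "Suc r * (Suc (2*r+1) choose Suc r) = Suc (2*r+1) * ((2*r+1) choose r)"
    by (rule Suc_times_binomial)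
  have "odd (2*r+1)" by simp
  from central_binomial_odd[OF this] have e2: "(2*r+1) choose Suc r = (2*r+1) choose r" by simp
  have e3: "Suc r * ((2*r+1) choose Suc r) = (2*r+1) * ((2*r) choose r)"
    using Suc_times_binomial[of r "2*r"] by (simp only: Suc_eq_plus1)
  have e4: "2 * Suc r = Suc (2*r+1)" by simp
  have "Suc r * (2 * Suc r choose Suc r) = Suc (2*r+1) * ((2*r+1) choose r)" using e1 by (simp only: e4)
  also have "\<dots> = 2 * (Suc r * ((2*r+1) choose Suc r))" by (simp only: e2) simp
  also have "\<dots> = 2 * ((2*r+1) * (2*r choose r))" by (simp only: e3)
  finally show ?thesis by simp
qed

lemma central_even: "r \<ge> 1 \<Longrightarrow> (16::real)^r \<le> (real (2*r choose r))^2 * (4 * r)"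
proof (induction r)
  case 0 then show ?case by simp
next
  case (Suc r)
  show ?case
  proof (cases "r = 0")
    case True then show ?thesis by simp
  next
    case False
    hence IH: "(16::real)^r \<le> (real (2*r choose r))^2 * (4 * r)" using Suc by simp
    define Xn where "Xn = (2*r choose r)"
    define Yn where "Yn = (2 * Suc r choose Suc r)"
    define X where "X = real Xn"
    define Y where "Y = real Yn"
    have recn: "Suc r * Yn = 2 * (2*r+1) * Xn" unfolding Xn_def Yn_def by (rule central_even_rec)
    have rec: "(real r + 1) * Y = 2 * (2*r+1) * X"
      unfolding X_def Y_def using arg_cong[OF recn, of real] by (simp add: algebra_simps)
    have rp: "real r > 0" using False by simp
    have "(real r + 1)^2 * (Y^2 * (4 * (real r + 1))) * (4 * real r) = 16 * (2*r+1)^2 * (X^2 * (4 * r)) * (real r + 1)"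
      proof -
      have "(real r + 1)^2 * Y^2 = (2 * (2*r+1) * X)^2" using rec by (metis power_mult_distrib)
      thus ?thesis by (simp add: power2_eq_square) argo
    qed
    also have "\<dots> \<ge> 16 * (2*r+1)^2 * 16^r * (real r + 1)"
    proof -
      have IH': "16^r \<le> X^2*(4*real r)" using IH unfolding X_def Xn_def by simp
      show ?thesis by (intro mult_right_mono mult_left_mono) (use IH' in \<open>auto simp: algebra_simps\<close>)
    qed
    finally have *: "16 * (2*r+1)^2 * 16^r * (real r + 1) \<le> (real r + 1)^2 * (Y^2 * (4 * (real r + 1))) * (4 * real r)" .
    have "(real r + 1)^2 * 16^Suc r * (4 * real r) \<le> 16 * (2*r+1)^2 * 16^r * (real r + 1)"
    proof -
      have "(real r + 1) * (4 * real r) \<le> (2*r+1)^2" by (simp add: power2_eq_square algebra_simps)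
      hence "(real r + 1) * (4 * real r) * (16 * 16^r * (real r + 1)) \<le> (2*r+1)^2 * (16 * 16^r * (real r + 1))"
        by (intro mult_right_mono) auto
      thus ?thesis by (simp add: power2_eq_square algebra_simps)
    qed
    with * have "(real r + 1)^2 * 4 * real r * 16^Suc r \<le> (real r + 1)^2 * 4 * real r * (Y^2 * (4 * (real r + 1)))"
      by (simp add: algebra_simps)
    hence "16^Suc r \<le> Y^2 * (4 * (real r + 1))"
      using rp by (subst (asm) mult_le_cancel_left_pos) (auto intro: mult_pos_pos)
    moreover have eq: "real (4 * Suc r) = 4 * (real r + 1)" by simp
    ultimately show ?thesis unfolding Y_def Yn_def by (simp only: eq)
  qed
qed

lemma central_gen: assumes "m \<ge> 1" shows "(4::real)^m \<le> (real (m choose ((m+1) div 2)))^2 * (16 * m)"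
proof (cases "even m")
  case True
  then obtain r where r: "m = 2*r" by auto
  with assms have r1: "r \<ge> 1" by simp
  have c: "(m+1) div 2 = r" using r by simp
  have "(4::real)^m = 16^r" using r by (simp add: power_mult)
  also have "\<dots> \<le> (real (2*r choose r))^2 * (4 * r)" using central_even[OF r1] by (simp add: mult_ac)
  also have "\<dots> \<le> (real (2*r choose r))^2 * (16 * m)" using r by (intro mult_left_mono) auto
  finally show ?thesis using r c by simp
next
  case False
  then obtain r where r: "m = 2*r+1" by (metis oddE)
  have c: "(m+1) div 2 = Suc r" using r by simp
  show ?thesis
  proof (cases "r = 0")
    case True then show ?thesis using r by simp
  next
    case False
    hence r1: "r \<ge> 1" by simp
    have ge: "(2*r+1 choose Suc r) \<ge> (2*r choose r)"
      using binomial_Suc_Suc[of "2*r" r] by simp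
    have "(4::real)^m = 4 * 16^r" using r by (simp add: power_mult power_add)
    also have "\<dots> \<le> 4 * ((real (2*r choose r))^2 * (4 * r))" using central_even[OF r1] by (simp add: mult_ac)
    also have "\<dots> \<le> (real (2*r+1 choose Suc r))^2 * (16 * m)"
    proof -
      have "(real (2*r choose r))^2 \<le> (real (2*r+1 choose Suc r))^2"
        using ge by (intro power_mono) auto
      moreover have "16 * real r \<le> 16 * real m" using r by simp
      ultimately have "(real (2*r choose r))^2 * (16 * real r) \<le> (real (2*r+1 choose Suc r))^2 * (16 * real m)"
        by (intro mult_mono) auto
      thus ?thesis by (simp add: mult_ac)
    qed
    finally show ?thesis using r c by simp
  qed
qed

lemma binom_ratio_step:
  fixes m c t i :: nat
  assumes "2*c \<le> m+1" "c + t \<le> m" "m > 0" "4*t \<le> m" "i < t"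
  shows "real (m choose (c+i+1)) \<ge> real (m choose (c+i)) * (1 - 4*t/m)"
proof -
  define j where "j = c + i"
  have st: "real (Suc j) * real (m choose Suc j) = real (m - j) * real (m choose j)"
    using arg_cong[OF binom_step[of j m], of real] by (simp only: of_nat_mult)
  have jm: "j < m" using assms unfolding j_def by simp
  have mj: "real (m - j) = real m - real j" using jm by simp
  have a: "real (2*c) \<le> real (m+1)" using assms(1) by (simp only: of_nat_le_iff)
  have b: "real (i+1) \<le> real t" using assms(5) by (simp only: of_nat_le_iff)
  have a': "2 * real c \<le> 1 + real m" using a by simp
  have b': "1 + real i \<le> real t" using b by simp
  have jj: "real j = real c + real i" unfolding j_def by simp
  have c2: "real c \<le> (real m + 1)/2" using a' by (simp add: field_simps)
  have j1: "real j + 1 \<le> (real m + 1)/2 + t" using c2 b' jj by linarith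
  have key: "(real m - 4*t) * (real j + 1) \<le> real m * (real m - real j)"
  proof -
    have a: "0 \<le> 2*real m - 4*t" using assms by simp
    have "(2*real m - 4*t) * (real j + 1) \<le> (2*real m - 4*t) * ((real m + 1)/2 + t)"
      using j1 a by (intro mult_left_mono) auto
    also have "\<dots> = real m * (real m + 1) - 2*t - 4*t^2" by (simp add: field_simps power2_eq_square)
    also have "\<dots> \<le> real m * (real m + 1)" using zero_le_power2[of "real t"] of_nat_0_le_iff[of t] by linarith
    finally show ?thesis by (simp add: algebra_simps)
  qed
  have mpos: "real m > 0" using assms by simp
  have "real (m choose j) * (1 - 4*t/m) * (real j + 1) = real (m choose j) * ((real m - 4*t) * (real j + 1)) / m"
    using mpos by (simp add: field_simps)
  also have "\<dots> \<le> real (m choose j) * (real m * (real m - real j)) / m"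
    using key mpos by (intro divide_right_mono mult_left_mono) auto
  also have "\<dots> = real (m - j) * real (m choose j)" using mpos mj by (simp add: field_simps)
  also have "\<dots> = real (m choose Suc j) * (real j + 1)" using st by (simp add: algebra_simps)
  finally have "real (m choose j) * (1 - 4*t/m) * (real j + 1) \<le> real (m choose Suc j) * (real j + 1)" .
  hence "real (m choose j) * (1 - 4*t/m) \<le> real (m choose Suc j)"
    by (rule mult_right_le_imp_le) simp
  thus ?thesis unfolding j_def by simp
qed

lemma binom_ratio:
  fixes m c t :: nat
  assumes "2*c \<le> m+1" "c + t \<le> m" "m > 0" "4*t \<le> m"
  shows "i \<le> t \<Longrightarrow> real (m choose (c+i)) \<ge> real (m choose c) * (1 - 4*t*i/m)"
proof (induction i)
  case 0 then show ?case by simp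
next
  case (Suc i)
  have IH: "real (m choose (c+i)) \<ge> real (m choose c) * (1 - 4*t*i/m)" using Suc.IH Suc.prems by (simp del: binomial_Suc_Suc)
  have st: "real (m choose (c+i+1)) \<ge> real (m choose (c+i)) * (1 - 4*t/m)"
    by (rule binom_ratio_step[OF assms]) (use Suc.prems in simp)
  have mpos: "real m > 0" using assms by simp
  show ?case
  proof (cases "1 - 4*t*(Suc i)/m \<le> 0")
    case True
    have "real (m choose c) * (1 - 4*t*(Suc i)/m) \<le> 0" by (rule mult_nonneg_nonpos) (use True in auto)
    also have "0 \<le> real (m choose (c + Suc i))" by simp
    finally show ?thesis .
  next
    case False
    have h1: "0 \<le> 1 - 4*t/m" using assms mpos by (simp add: field_simps)
    have "4*t*i/m \<le> 4*t*(Suc i)/m" by (intro divide_right_mono) auto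
    hence h2: "0 \<le> 1 - 4*t*i/m" using False by linarith
    have "real (m choose c) * (1 - 4*t*(Suc i)/m) \<le> real (m choose c) * ((1 - 4*t*i/m) * (1 - 4*t/m))"
    proof (intro mult_left_mono)
      have sp: "4*t*(Suc i)/m = 4*t*i/m + 4*t/m" by (simp add: add_divide_distrib[symmetric] algebra_simps)
      have "(1 - 4*t*i/m) * (1 - 4*t/m) = 1 - (4*t*i/m + 4*t/m) + (4*t*i/m)*(4*t/m)"
        by (rule ring1)
      hence "(1 - 4*t*i/m) * (1 - 4*t/m) = 1 - 4*t*(Suc i)/m + (4*t*i/m)*(4*t/m)"
        using sp by simp
      moreover have "0 \<le> (4*t*i/m)*(4*t/m)" by simp
      ultimately show "1 - 4*t*(Suc i)/m \<le> (1 - 4*t*i/m) * (1 - 4*t/m)" by linarith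
    qed simp
    also have "\<dots> = (real (m choose c) * (1 - 4*t*i/m)) * (1 - 4*t/m)" by simp
    also have "\<dots> \<le> real (m choose (c+i)) * (1 - 4*t/m)" using IH h1 by (intro mult_right_mono) auto
    also have "\<dots> \<le> real (m choose (c + Suc i))" using st by (simp only: add_Suc_right Suc_eq_plus1 add.assoc)
    finally show ?thesis .
  qed
qed

lemma central_sqrt: assumes "m \<ge> 1" shows "(2::real)^m \<le> real (m choose ((m+1) div 2)) * (4 * sqrt m)"
proof -
  have "sqrt ((4::real)^m) \<le> sqrt ((real (m choose ((m+1) div 2)))^2 * (16 * m))"
    using central_gen[OF assms] by (rule real_sqrt_le_mono)
  moreover have "sqrt ((4::real)^m) = 2^m"
    by (metis power_mult_distrib real_sqrt_abs real_sqrt_power abs_numeral power2_eq_square real_sqrt_mult_self mult_2 num_double numeral_times_numeral power_even_eq) 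
  moreover have "sqrt ((real (m choose ((m+1) div 2)))^2 * (16 * m)) = real (m choose ((m+1) div 2)) * (4 * sqrt m)"
    by (simp add: real_sqrt_mult)
  ultimately show ?thesis by simp
qed

lemma window_card:
  fixes C :: "'a set" and m :: nat and h :: real
  assumes fC: "finite C" and cC: "card C = m" and h2: "h \<ge> 2" and hm: "400 * h^2 \<le> m"
  shows "real (card {Y. Y \<subseteq> C \<and> real m / 2 \<le> real (card Y) \<and> real (card Y) \<le> real m / 2 + h})
           \<ge> h * 2^m / (16 * sqrt m)"
proof -
  define c where "c = (m+1) div 2"
  define sN where "sN = nat \<lfloor>h\<rfloor>"
  have "(2::real)^2 \<le> h^2" using h2 by (intro power_mono) auto
  hence m1: "real m \<ge> 1600" using hm by simp
  hence mpos: "m > 0" "m \<ge> 1" by auto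
  have sh: "real sN \<le> h" "real sN \<ge> h - 1" using h2 unfolding sN_def by linarith+
  have sN2: "real sN \<ge> h / 2" using sh h2 by linarith
  have n1: "2*c \<le> m+1" "m \<le> 2*c" unfolding c_def by presburger+
  have r1: "real (2*c) \<le> real (m+1)" "real m \<le> real (2*c)" using n1 by (simp only: of_nat_le_iff)+
  have c1: "real m \<le> 2 * real c" "2 * real c \<le> real m + 1" using r1 by simp_all
  have "h * 1 \<le> h * h" using h2 by (intro mult_left_mono) auto
  hence h4: "4 * h \<le> real m" using hm h2 unfolding power2_eq_square by linarith
  have a1: "2*c \<le> m+1" unfolding c_def by simp
  have a3: "4* sN \<le> m" using sh h4 by linarith
  have "real c + real sN \<le> real m" using c1 sh h4 m1 by linarith
  hence a2: "c + sN \<le> m" by linarith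
  have ss: "8 * real sN^2 \<le> real m"
  proof -
    have "real sN^2 \<le> h^2" using sh h2 by (intro power_mono) auto
    thus ?thesis using hm by linarith
  qed
  define W where "W = {Y. Y \<subseteq> C \<and> real m / 2 \<le> real (card Y) \<and> real (card Y) \<le> real m / 2 + h}"
  define U where "U = (\<lambda>i. {Y. Y \<subseteq> C \<and> card Y = c + i})"
  have sub: "(\<Union>i\<in>{..<sN}. U i) \<subseteq> W"
  proof
    fix Y assume "Y \<in> (\<Union>i\<in>{..<sN}. U i)"
    then obtain i where i: "i < sN" "Y \<subseteq> C" "card Y = c + i" unfolding U_def by auto
    have "real i + 1 \<le> real sN" using i by simp
    thus "Y \<in> W" unfolding W_def using i c1 sh by auto
  qed
  have finW: "finite W" unfolding W_def using fC by auto
  have cardU: "card (\<Union>i\<in>{..<sN}. U i) = (\<Sum>i<sN. card (U i))"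
    by (rule card_UN_disjoint) (auto simp: U_def fC intro: finite_subset)
  have UC: "card (U i) = m choose (c+i)" for i
    unfolding U_def using n_subsets[OF fC, of "c+i"] cC by simp
  have each: "real (card (U i)) \<ge> real (m choose c) / 2" if "i < sN" for i
  proof -
    have "real (m choose (c+i)) \<ge> real (m choose c) * (1 - 4* sN*i/m)"
      using binom_ratio[OF a1 a2 mpos(1) a3, of i] that by simp
    moreover have "1 - 4* sN*i/m \<ge> (1::real)/2"
    proof -
      have "4*real sN*real i \<le> 4 * real sN * real sN" using that by (intro mult_left_mono) auto
      also have "\<dots> \<le> real m / 2" using ss by (simp add: power2_eq_square)
      finally show ?thesis using mpos by (simp add: field_simps)
    qed
    moreover have "real (m choose c) * (1/2) \<le> real (m choose c) * (1 - 4* sN*i/m)"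
      using calculation(2) by (intro mult_left_mono) auto
    ultimately have "real (m choose (c+i)) \<ge> real (m choose c) * (1/2)" by linarith
    thus ?thesis using UC by simp
  qed
  have "real (card W) \<ge> real (card (\<Union>i\<in>{..<sN}. U i))"
    using card_mono[OF finW sub] by simp
  also have "real (card (\<Union>i\<in>{..<sN}. U i)) = (\<Sum>i<sN. real (card (U i)))" using cardU by simp
  also have "(\<Sum>i<sN. real (card (U i))) \<ge> (\<Sum>i<sN. real (m choose c) / 2)"
    by (rule sum_mono) (use each in auto)
  also have "(\<Sum>i<sN. real (m choose c) / 2) = real sN * (real (m choose c) / 2)" by simp
  finally have W1: "real (card W) \<ge> real sN * (real (m choose c) / 2)" .
  have cen: "(2::real)^m \<le> real (m choose c) * (4 * sqrt m)" using central_sqrt[OF mpos(2)] c_def by simp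
  have sqp: "sqrt (real m) > 0" using mpos by simp
  have "h * 2^m / (16 * sqrt m) \<le> h * (real (m choose c) * (4 * sqrt m)) / (16 * sqrt m)"
    using cen h2 sqp by (intro divide_right_mono mult_left_mono) auto
  also have "\<dots> = (h/2) * (real (m choose c) / 2)" using sqp by (simp add: field_simps)
  also have "\<dots> \<le> real sN * (real (m choose c) / 2)" using sN2 by (intro mult_right_mono) auto
  finally show ?thesis using W1 unfolding W_def by linarith
qed

lemma prod_if_one:
  assumes "finite I" "l \<in> I"
  shows "(\<Prod>i\<in>I. if i = l then a else b) = (a::nat) * b ^ (card I - 1)"
proof -
  have "(\<Prod>i\<in>I. if i = l then a else b) = (if l = l then a else b) * (\<Prod>i\<in>I - {l}. if i = l then a else b)"
    using assms by (rule prod.remove)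
  also have "(\<Prod>i\<in>I - {l}. if i = l then a else b) = (\<Prod>i\<in>I - {l}. b)"
    by (rule prod.cong) auto
  also have "\<dots> = b ^ (card I - 1)" using assms by simp
  finally show ?thesis by simp
qed

lemma per_Y_card:
  fixes C Y :: "nat set" and k L :: nat and beta :: bool
  assumes fC: "finite C" and YC: "Y \<subseteq> C"
  defines "Lists \<equiv> {xs. set xs \<subseteq> C \<and> length xs = k}"
  defines "Ts \<equiv> PiE {..<L} (\<lambda>_. Lists)"
  defines "Bs \<equiv> PiE {..<L} (\<lambda>_. UNIV::bool set)"
  shows "card {w \<in> Ts \<times> Bs. \<exists>l. S_T (fst w) L Y = {l} \<and> snd w l = beta}
         = L * (card Y ^ k * (card C ^ k - card Y ^ k) ^ (L - 1)) * 2 ^ (L - 1)"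
proof -
  define In where "In = {xs. set xs \<subseteq> Y \<and> length xs = k}"
  define Tl where "Tl = (\<lambda>l. PiE {..<L} (\<lambda>i. if i = l then In else Lists - In))"
  define Bl where "Bl = (\<lambda>l. PiE {..<L} (\<lambda>i. if i = l then {beta} else (UNIV::bool set)))"
  have fY: "finite Y" using fC YC finite_subset by blast
  have InL: "In \<subseteq> Lists" unfolding In_def Lists_def using YC by auto
  have finL: "finite Lists" unfolding Lists_def using finite_lists_length_eq[OF fC] by simp
  have cIn: "card In = card Y ^ k" unfolding In_def by (rule card_lists_length_eq[OF fY])
  have cL: "card Lists = card C ^ k" unfolding Lists_def by (rule card_lists_length_eq[OF fC])
  have cLI: "card (Lists - In) = card C ^ k - card Y ^ k"
    using card_Diff_subset[OF finite_subset[OF InL finL] InL] cIn cL by simp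
  have seteq: "{w \<in> Ts \<times> Bs. \<exists>l. S_T (fst w) L Y = {l} \<and> snd w l = beta} = (\<Union>l\<in>{..<L}. Tl l \<times> Bl l)"
  proof (intro set_eqI iffI)
    fix w assume "w \<in> {w \<in> Ts \<times> Bs. \<exists>l. S_T (fst w) L Y = {l} \<and> snd w l = beta}"
    then obtain T b l where w: "w = (T, b)" "T \<in> Ts" "b \<in> Bs" "S_T T L Y = {l}" "b l = beta" by auto
    have lL: "l < L" using w(4) unfolding S_T_def by blast
    have "T \<in> Tl l"
      unfolding Tl_def
    proof (rule PiE_I)
      fix i assume i: "i \<in> {..<L}"
      have Ti: "T i \<in> Lists" using w(2) i unfolding Ts_def by auto
      have "set (T i) \<subseteq> Y \<longleftrightarrow> i = l" using w(4) i unfolding S_T_def by blast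
      thus "T i \<in> (if i = l then In else Lists - In)" using Ti unfolding In_def Lists_def by auto
    next
      fix i assume "i \<notin> {..<L}" thus "T i = undefined" using w(2) unfolding Ts_def by auto
    qed
    moreover have "b \<in> Bl l"
      unfolding Bl_def using w(3,5) unfolding Bs_def by (auto simp: PiE_iff)
    ultimately show "w \<in> (\<Union>l\<in>{..<L}. Tl l \<times> Bl l)" using w(1) lL by auto
  next
    fix w assume "w \<in> (\<Union>l\<in>{..<L}. Tl l \<times> Bl l)"
    then obtain T b l where w: "w = (T, b)" "l < L" "T \<in> Tl l" "b \<in> Bl l" by auto
    have "Tl l \<subseteq> Ts" unfolding Tl_def Ts_def by (rule PiE_mono) (use InL in auto)
    hence T1: "T \<in> Ts" using w(3) by blast
    have "Bl l \<subseteq> Bs" unfolding Bl_def Bs_def by (rule PiE_mono) auto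
    hence b1: "b \<in> Bs" using w(4) by blast
    have S: "S_T T L Y = {l}"
    proof -
      have "set (T i) \<subseteq> Y \<longleftrightarrow> i = l" if i: "i < L" for i
      proof -
        have Ti: "T i \<in> (if i = l then In else Lists - In)"
          using PiE_mem[of T "{..<L}" "\<lambda>x. if x = l then In else Lists - In" i] w(3) i unfolding Tl_def by simp
        show ?thesis
        proof (cases "i = l")
          case True then show ?thesis using Ti unfolding In_def by simp
        next
          case False
          hence "T i \<in> Lists" "T i \<notin> In" using Ti by auto
          hence "\<not> set (T i) \<subseteq> Y" unfolding In_def Lists_def by simp
          then show ?thesis using False by simp
        qed
      qed
      thus ?thesis unfolding S_T_def using w(2) by auto
    qed
    have "b l = beta" using PiE_mem[of b "{..<L}" "\<lambda>x. if x = l then {beta} else UNIV" l] w(4) w(2) unfolding Bl_def by simp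
    thus "w \<in> {w \<in> Ts \<times> Bs. \<exists>l. S_T (fst w) L Y = {l} \<and> snd w l = beta}" using T1 b1 S w(1) by auto
  qed
  have cT: "card (Tl l) = card Y ^ k * (card C ^ k - card Y ^ k) ^ (L - 1)" if "l < L" for l
  proof -
    have "card (Tl l) = (\<Prod>i\<in>{..<L}. card (if i = l then In else Lists - In))"
      unfolding Tl_def by (rule card_PiE) simp
    also have "\<dots> = (\<Prod>i\<in>{..<L}. if i = l then card In else card (Lists - In))"
      by (rule prod.cong) auto
    also have "\<dots> = card In * card (Lists - In) ^ (L - 1)"
      using prod_if_one[of "{..<L}" l] that by simp
    finally show ?thesis using cIn cLI by simp
  qed
  have cB: "card (Bl l) = 2 ^ (L - 1)" if "l < L" for l
  proof -
    have "card (Bl l) = (\<Prod>i\<in>{..<L}. card (if i = l then {beta} else (UNIV::bool set)))"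
      unfolding Bl_def by (rule card_PiE) simp
    also have "\<dots> = (\<Prod>i\<in>{..<L}. if i = l then 1 else 2)"
      by (rule prod.cong) auto
    also have "\<dots> = 1 * 2 ^ (L - 1)"
      using prod_if_one[of "{..<L}" l] that by simp
    finally show ?thesis by simp
  qed
  have finIn: "finite In" using finite_subset[OF InL finL] .
  have finT: "finite (Tl l)" for l unfolding Tl_def using finL finIn by (intro finite_PiE) auto
  have finB: "finite (Bl l)" for l unfolding Bl_def by (intro finite_PiE) auto
  have disj: "\<forall>i\<in>{..<L}. \<forall>j\<in>{..<L}. i \<noteq> j \<longrightarrow> (Tl i \<times> Bl i) \<inter> (Tl j \<times> Bl j) = {}"
  proof (intro ballI impI)
    fix i j assume ij: "i \<in> {..<L}" "j \<in> {..<L}" "i \<noteq> j"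
    show "(Tl i \<times> Bl i) \<inter> (Tl j \<times> Bl j) = {}"
    proof (rule ccontr)
      assume "(Tl i \<times> Bl i) \<inter> (Tl j \<times> Bl j) \<noteq> {}"
      then obtain T where T: "T \<in> Tl i" "T \<in> Tl j" by auto
      have a: "T i \<in> In" using PiE_mem[of T "{..<L}" "\<lambda>x. if x = i then In else Lists - In" i] T ij unfolding Tl_def by simp
      have b: "T i \<in> Lists - In" using PiE_mem[of T "{..<L}" "\<lambda>x. if x = j then In else Lists - In" i] T ij unfolding Tl_def by simp
      from a b show False by simp
    qed
  qed
  have "card (\<Union>l\<in>{..<L}. Tl l \<times> Bl l) = (\<Sum>l<L. card (Tl l \<times> Bl l))"
    by (rule card_UN_disjoint) (use finT finB disj in auto)
  also have "\<dots> = (\<Sum>l<L. card Y ^ k * (card C ^ k - card Y ^ k) ^ (L - 1) * 2 ^ (L - 1))"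
    by (rule sum.cong) (auto simp: card_cartesian_product cT cB)
  also have "\<dots> = L * (card Y ^ k * (card C ^ k - card Y ^ k) ^ (L - 1)) * 2 ^ (L - 1)" by simp
  finally show ?thesis using seteq by simp
qed

lemma exp_tenth: "exp (1/10::real) \<le> 6/5"
proof -
  have "norm (exp (1/10::real)) \<le> 1 + 2 * norm (1/10::real)"
    by (rule exp_bound_lemma) simp
  thus ?thesis by simp
qed

lemma q_core:
  fixes q :: real and L k :: nat
  assumes q1: "(1/2)^k \<le> q" and q2: "q \<le> (1/2)^k * (6/5)"
    and L1: "(1/10) * 2^k - 1 \<le> real L" and L2: "real L \<le> (1/10) * 2^k" and k10: "k \<ge> 10"
    and Lp: "L \<ge> 1"
  shows "real L * q * (1 - q)^(L - 1) \<ge> 2/25"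
proof -
  have hk: "(2::real)^k * (1/2)^k = 1" by (simp add: power_mult_distrib[symmetric])
  have small: "(1/2::real)^k \<le> 1/1024"
  proof -
    have "(1/2::real)^k \<le> (1/2)^10" using k10 by (intro power_decreasing) auto
    moreover have "(1/2::real)^10 = 1/1024" by (simp add: power_divide)
    ultimately show ?thesis by linarith
  qed
  have "(0::real) \<le> (1/2)^k" by simp
  hence qpos: "q \<ge> 0" using q1 by linarith
  have Lq_up: "real L * q \<le> 3/25"
  proof -
    have "real L * q \<le> ((1/10) * 2^k) * ((1/2)^k * (6/5))"
      using L2 q2 qpos by (intro mult_mono) auto
    also have "\<dots> = (6/50) * ((2::real)^k * (1/2)^k)" by (simp add: algebra_simps)
    finally show ?thesis using hk by simp
  qed
  have Lq_lo: "real L * q \<ge> 1/10 - 1/1024"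
  proof -
    have "real L * q \<ge> real L * (1/2)^k" using q1 by (intro mult_left_mono) auto
    moreover have "real L * (1/2)^k \<ge> ((1/10) * 2^k - 1) * (1/2)^k"
      using L1 by (intro mult_right_mono) auto
    moreover have "((1/10) * 2^k - 1) * (1/2::real)^k = 1/10 - (1/2)^k"
      using hk by (simp add: algebra_simps)
    ultimately show ?thesis using small by linarith
  qed
  have "1 * q \<le> real L * q" using Lp qpos by (intro mult_right_mono) auto
  hence q_le1: "q \<le> 1" using Lq_up by linarith
  have bern: "1 + real (L - 1) * (- q) \<le> (1 + (- q))^(L - 1)"
    by (rule Bernoulli_inequality) (use q_le1 in simp)
  have "real (L - 1) * q \<le> real L * q" using qpos by (intro mult_right_mono) auto
  hence pw: "(1 - q)^(L - 1) \<ge> 22/25" using bern Lq_up by simp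
  have "real L * q * (1 - q)^(L - 1) \<ge> (1/10 - 1/1024) * (22/25)"
    using Lq_lo pw by (intro mult_mono) auto
  thus ?thesis by simp
qed

lemma per_Y_ratio:
  fixes m w k L :: nat and h :: real
  assumes m1: "m \<ge> 1" and w1: "real m / 2 \<le> real w" and w2: "real w \<le> real m / 2 + h"
    and wm: "w \<le> m" and hk: "2 * h * k \<le> real m / 10"
    and k10: "k \<ge> 10" and L1: "(1/10) * 2^k - 1 \<le> real L" and L2: "real L \<le> (1/10) * 2^k"
  shows "real (L * (w^k * (m^k - w^k)^(L-1)) * 2^(L-1)) \<ge> (1/25) * real ((m^k)^L * 2^L)"
proof -
  have Lp: "L \<ge> 1"
  proof -
    have "(2::real)^10 \<le> 2^k" using k10 by (intro power_increasing) auto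
    hence "real L \<ge> 1" using L1 by simp
    thus ?thesis by simp
  qed
  have mpos: "real m > 0" using m1 by simp
  define q where "q = (real w / real m)^k"
  have q1: "(1/2)^k \<le> q" unfolding q_def using w1 mpos by (intro power_mono) (auto simp: field_simps)
  have q2: "q \<le> (1/2)^k * (6/5)"
  proof -
    have hpos: "h \<ge> 0" using w1 w2 by simp
    have "real w / real m \<le> (1/2) * (1 + 2 * h / real m)" using w2 mpos by (simp add: field_simps)
    hence "q \<le> ((1/2) * (1 + 2 * h / real m))^k" unfolding q_def
      using mpos by (intro power_mono) auto
    also have "\<dots> = (1/2)^k * (1 + 2 * h / real m)^k" by (rule power_mult_distrib)
    also have "(1 + 2 * h / real m)^k \<le> (exp (2 * h / real m))^k"
      by (intro power_mono) (use hpos mpos in auto)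
    also have "(exp (2 * h / real m))^k = exp (real k * (2 * h / real m))" by (rule exp_of_nat_mult[symmetric])
    also have "\<dots> \<le> exp (1/10)"
    proof -
      have "real k * (2 * h / real m) = (2 * h * k) / real m" by simp
      also have "\<dots> \<le> 1/10" using hk mpos by (simp add: field_simps)
      finally show ?thesis by simp
    qed
    also have "\<dots> \<le> 6/5" by (rule exp_tenth)
    finally show ?thesis by (simp add: mult_left_mono)
  qed
  have core: "real L * q * (1 - q)^(L - 1) \<ge> 2/25" by (rule q_core[OF q1 q2 L1 L2 k10 Lp])
  define M where "M = real m ^ k"
  have Mpos: "M > 0" unfolding M_def using mpos by simp
  have wk: "real (w^k) = q * M" unfolding q_def M_def using mpos by (simp add: power_divide)
  have wkm: "w^k \<le> m^k" using wm by (rule power_mono) simp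
  have dk: "real (m^k - w^k) = (1 - q) * M" using wkm wk unfolding M_def by (simp add: of_nat_diff algebra_simps)
  have Lsplit: "L = Suc (L - 1)" using Lp by simp
  have "real (L * (w^k * (m^k - w^k)^(L-1)) * 2^(L-1)) = real L * (q * M) * ((1-q)*M)^(L-1) * 2^(L-1)"
    using wk dk by simp
  also have "\<dots> = (real L * q * (1-q)^(L-1)) * (M * M^(L-1) * 2^(L-1))" unfolding power_mult_distrib by (simp only: mult_ac)
  also have "\<dots> \<ge> (2/25) * (M * M^(L-1) * 2^(L-1))" using core Mpos by (intro mult_right_mono) auto
  finally have *: "(2/25) * (M * M^(L-1) * 2^(L-1)) \<le> real (L * (w^k * (m^k - w^k)^(L-1)) * 2^(L-1))" .
  have "real ((m^k)^L * 2^L) = M^L * 2^L" unfolding M_def by simp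
  also have "\<dots> = 2 * (M * M^(L-1) * 2^(L-1))" by (subst (1 2) Lsplit) (simp add: algebra_simps)
  finally show ?thesis using * by simp
qed

lemma card_filter_sum: "finite A \<Longrightarrow> card {x\<in>A. Q x} = (\<Sum>x\<in>A. if Q x then 1 else (0::nat))"
  by (simp add: sum.inter_filter[symmetric])

lemma double_count:
  assumes "finite Om" "finite Win"
  shows "(\<Sum>w\<in>Om. card {y\<in>Win. P y w}) = (\<Sum>y\<in>Win. card {w\<in>Om. P y w})"
proof -
  have "(\<Sum>w\<in>Om. card {y\<in>Win. P y w}) = (\<Sum>w\<in>Om. \<Sum>y\<in>Win. if P y w then 1 else (0::nat))"
    using assms by (simp add: card_filter_sum)
  also have "\<dots> = (\<Sum>y\<in>Win. \<Sum>w\<in>Om. if P y w then 1 else (0::nat))" by (rule sum.swap)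
  also have "\<dots> = (\<Sum>y\<in>Win. card {w\<in>Om. P y w})" using assms by (simp add: card_filter_sum)
  finally show ?thesis .
qed

lemma rev_markov:
  fixes Om :: "'w set" and Win :: "'y set" and P :: "'y \<Rightarrow> 'w \<Rightarrow> bool" and th p r :: real
  assumes fO: "finite Om" and fW: "finite Win" and ne: "Win \<noteq> {}"
    and each: "\<And>y. y \<in> Win \<Longrightarrow> real (card {w\<in>Om. P y w}) \<ge> p * real (card Om)"
    and th0: "th \<ge> 0" and thW: "th \<le> (p - r) * real (card Win)"
  shows "real (card {w\<in>Om. th \<le> real (card {y\<in>Win. P y w})}) \<ge> r * real (card Om)"
proof -
  define X where "X = (\<lambda>w. real (card {y\<in>Win. P y w}))"
  define G where "G = {w\<in>Om. th \<le> X w}"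
  have Wpos: "real (card Win) > 0" using fW ne by (simp add: card_gt_0_iff)
  have "(\<Sum>w\<in>Om. X w) = real (\<Sum>w\<in>Om. card {y\<in>Win. P y w})" unfolding X_def by simp
  also have "\<dots> = real (\<Sum>y\<in>Win. card {w\<in>Om. P y w})" using double_count[OF fO fW] by simp
  also have "\<dots> = (\<Sum>y\<in>Win. real (card {w\<in>Om. P y w}))" by simp
  also have "\<dots> \<ge> (\<Sum>y\<in>Win. p * real (card Om))" by (rule sum_mono) (rule each)
  finally have lo: "(\<Sum>w\<in>Om. X w) \<ge> real (card Win) * (p * real (card Om))" by simp
  have pt: "X w \<le> (if w \<in> G then real (card Win) else th)" if "w \<in> Om" for w
  proof (cases "w \<in> G")
    case True
    have "card {y\<in>Win. P y w} \<le> card Win" using fW by (intro card_mono) auto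
    then show ?thesis using True unfolding X_def by simp
  next
    case False
    then show ?thesis using that unfolding G_def by auto
  qed
  have "(\<Sum>w\<in>Om. X w) \<le> (\<Sum>w\<in>Om. if w \<in> G then real (card Win) else th)"
    by (rule sum_mono) (rule pt)
  also have "\<dots> = (\<Sum>w\<in>G. real (card Win)) + (\<Sum>w\<in>Om - G. th)"
  proof -
    have GO: "G \<subseteq> Om" unfolding G_def by auto
    have "(\<Sum>w\<in>Om. if w \<in> G then real (card Win) else th) = (\<Sum>w\<in>Om \<inter> {w. w \<in> G}. real (card Win)) + (\<Sum>w\<in>Om \<inter> - {w. w \<in> G}. th)"
      using fO by (rule sum.If_cases)
    moreover have "Om \<inter> {w. w \<in> G} = G" "Om \<inter> - {w. w \<in> G} = Om - G" using GO by auto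
    ultimately show ?thesis by simp
  qed
  also have "\<dots> = real (card G) * real (card Win) + real (card (Om - G)) * th" by simp
  also have "\<dots> \<le> real (card G) * real (card Win) + real (card Om) * th"
  proof -
    have "card (Om - G) \<le> card Om" using fO by (intro card_mono) auto
    thus ?thesis using th0 by (intro add_left_mono mult_right_mono) auto
  qed
  finally have up: "(\<Sum>w\<in>Om. X w) \<le> real (card G) * real (card Win) + real (card Om) * th" .
  have "real (card Om) * th \<le> real (card Om) * ((p - r) * real (card Win))"
    using thW by (intro mult_left_mono) auto
  hence "real (card Win) * (p * real (card Om)) \<le> real (card G) * real (card Win) + real (card Om) * ((p - r) * real (card Win))"
    using lo up by linarith
  hence "real (card Win) * (r * real (card Om)) \<le> real (card Win) * real (card G)"
    by (simp add: algebra_simps)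
  hence "r * real (card Om) \<le> real (card G)" using Wpos by (simp add: mult_le_cancel_left_pos)
  thus ?thesis unfolding G_def X_def .
qed

lemma bind_prob_ge:
  assumes "\<And>x. x \<in> set_pmf p \<Longrightarrow> measure_pmf.prob (f x) E \<ge> c" "c \<ge> 0"
  shows "measure_pmf.prob (bind_pmf p f) E \<ge> c"
proof -
  have "emeasure (measure_pmf (bind_pmf p f)) E = (\<integral>\<^sup>+x. emeasure (measure_pmf (f x)) E \<partial>measure_pmf p)"
    by simp
  also have "\<dots> \<ge> (\<integral>\<^sup>+x. ennreal c \<partial>measure_pmf p)"
  proof (rule nn_integral_mono_AE)
    show "AE x in measure_pmf p. ennreal c \<le> emeasure (measure_pmf (f x)) E"
      using AE_measure_pmf[of p]
    proof (rule AE_mp)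
      show "AE x in measure_pmf p. x \<in> set_pmf p \<longrightarrow> ennreal c \<le> emeasure (measure_pmf (f x)) E"
        using assms by (auto simp: measure_pmf.emeasure_eq_measure intro!: AE_I2)
    qed
  qed
  also have "(\<integral>\<^sup>+x. ennreal c \<partial>measure_pmf p) = ennreal c" by simp
  finally have "ennreal c \<le> ennreal (measure_pmf.prob (bind_pmf p f) E)"
    by (simp add: measure_pmf.emeasure_eq_measure)
  thus ?thesis using assms(2) by (simp add: ennreal_le_iff measure_nonneg)
qed

lemma pair_pmf_of_set:
  assumes "finite S" "S \<noteq> {}" "finite R" "R \<noteq> {}"
  shows "pair_pmf (pmf_of_set S) (pmf_of_set R) = pmf_of_set (S \<times> R)"
proof (rule pmf_eqI)
  fix x :: "'a \<times> 'b"
  obtain s r where x: "x = (s, r)" by (cases x)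
  have "S \<times> R \<noteq> {}" "finite (S \<times> R)" using assms by auto
  then show "pmf (pair_pmf (pmf_of_set S) (pmf_of_set R)) x = pmf (pmf_of_set (S \<times> R)) x"
    using assms unfolding x by (simp add: pmf_pair card_cartesian_product indicator_def)
qed

lemma inner_prob:
  assumes "finite S" "S \<noteq> {}" "finite R" "R \<noteq> {}"
  shows "measure_pmf.prob (bind_pmf (pmf_of_set S) (\<lambda>T. bind_pmf (pmf_of_set R) (\<lambda>b. return_pmf (A, T, b)))) E
        = real (card {w \<in> S \<times> R. (A, fst w, snd w) \<in> E}) / real (card (S \<times> R))"
proof -
  have eq: "bind_pmf (pmf_of_set S) (\<lambda>T. bind_pmf (pmf_of_set R) (\<lambda>b. return_pmf (A, T, b)))
       = map_pmf (\<lambda>w. (A, fst w, snd w)) (pair_pmf (pmf_of_set S) (pmf_of_set R))"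
    by (simp add: pair_pmf_def map_bind_pmf)
  have fin: "S \<times> R \<noteq> {}" "finite (S \<times> R)" using assms by auto
  have "measure_pmf.prob (pmf_of_set (S \<times> R)) ((\<lambda>w. (A, fst w, snd w)) -` E)
        = real (card ((S \<times> R) \<inter> ((\<lambda>w. (A, fst w, snd w)) -` E))) / real (card (S \<times> R))"
    using fin by (rule measure_pmf_of_set)
  moreover have "(S \<times> R) \<inter> ((\<lambda>w. (A, fst w, snd w)) -` E) = {w \<in> S \<times> R. (A, fst w, snd w) \<in> E}" by auto
  ultimately show ?thesis unfolding eq using pair_pmf_of_set[OF assms] by simp
qed

lemma main_A:
  fixes n a m k L :: nat and eps h th :: real and A :: "nat set" and beta :: bool
  assumes An: "A \<subseteq> {..<n}" and cA: "card A = a" and mdef: "m = n - a" and m1: "m \<ge> 1"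
    and hdef: "h = 0.05 * eps * sqrt (real m)"
    and h2: "h \<ge> 2" and hm: "400 * h^2 \<le> real m" and hk: "2 * h * k \<le> real m / 10"
    and k10: "k \<ge> 10" and L1: "(1/10) * 2^k - 1 \<le> real L" and L2: "real L \<le> (1/10) * 2^k"
    and th0: "th \<ge> 0" and thW: "th \<le> (3/100) * (h * 2^m / (16 * sqrt m))"
  shows "measure_pmf.prob (bind_pmf (talagrand_pmf ({..<n} - A) k L)
           (\<lambda>T. bind_pmf (pmf_of_set (PiE {..<L} (\<lambda>_. UNIV :: bool set))) (\<lambda>b. return_pmf (A, T, b))))
           {(A, T, b). th \<le> real (good_count n m eps L A T b beta)} \<ge> 1/100"
proof -
  define C where "C = {..<n} - A"
  define Lists where "Lists = {xs. set xs \<subseteq> C \<and> length xs = k}"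
  define Ts where "Ts = PiE {..<L} (\<lambda>_. Lists)"
  define Bs where "Bs = PiE {..<L} (\<lambda>_. UNIV::bool set)"
  define Win where "Win = {Y. Y \<subseteq> C \<and> real m / 2 \<le> real (card Y) \<and> real (card Y) \<le> real m / 2 + h}"
  define P where "P = (\<lambda>Y (w :: (nat \<Rightarrow> nat list) \<times> (nat \<Rightarrow> bool)). \<exists>l. S_T (fst w) L Y = {l} \<and> snd w l = beta)"
  have fC: "finite C" unfolding C_def by simp
  have cC: "card C = m" unfolding C_def mdef using An cA by (simp add: card_Diff_subset finite_subset)
  have Cne: "C \<noteq> {}" using cC m1 by auto
  then obtain x0 where x0: "x0 \<in> C" by auto
  have finL: "finite Lists" unfolding Lists_def using finite_lists_length_eq[OF fC] by simp
  have Lne: "Lists \<noteq> {}" unfolding Lists_def using x0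
    by (auto intro!: exI[of _ "replicate k x0"])
  have fT: "finite Ts" "Ts \<noteq> {}" unfolding Ts_def using finL Lne by (auto simp: PiE_eq_empty_iff intro: finite_PiE)
  have fB: "finite Bs" "Bs \<noteq> {}" unfolding Bs_def by (auto simp: PiE_eq_empty_iff intro: finite_PiE)
  have tal: "talagrand_pmf ({..<n} - A) k L = pmf_of_set Ts"
    unfolding talagrand_pmf_def Ts_def Lists_def C_def ..
  have cTs: "card Ts = (card C ^ k) ^ L" unfolding Ts_def Lists_def
    by (simp add: card_PiE card_lists_length_eq[OF fC])
  have cBs: "card Bs = 2 ^ L" unfolding Bs_def by (simp add: card_PiE)
  have cOm: "card (Ts \<times> Bs) = (m ^ k) ^ L * 2 ^ L" using cTs cBs cC by (simp add: card_cartesian_product)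
  have Ompos: "real (card (Ts \<times> Bs)) > 0" using fT fB by (simp add: card_gt_0_iff)
  have fW: "finite Win" unfolding Win_def using fC by auto
  have Wbig: "real (card Win) \<ge> h * 2^m / (16 * sqrt m)"
    unfolding Win_def by (rule window_card[OF fC cC h2 hm])
  have Wpos: "h * 2^m / (16 * sqrt m) > 0" using h2 m1 by simp
  have Wne: "Win \<noteq> {}" using Wbig Wpos by auto
  have each: "real (card {w\<in>Ts \<times> Bs. P Y w}) \<ge> (1/25) * real (card (Ts \<times> Bs))" if Y: "Y \<in> Win" for Y
  proof -
    have YC: "Y \<subseteq> C" and w1: "real m / 2 \<le> real (card Y)" and w2: "real (card Y) \<le> real m / 2 + h"
      using Y unfolding Win_def by auto
    have wm: "card Y \<le> m" using card_mono[OF fC YC] cC by simp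
    have "card {w\<in>Ts \<times> Bs. P Y w} = L * (card Y ^ k * (card C ^ k - card Y ^ k) ^ (L - 1)) * 2 ^ (L - 1)"
      unfolding P_def Ts_def Bs_def Lists_def by (rule per_Y_card[OF fC YC])
    also have "\<dots> = L * (card Y ^ k * (m ^ k - card Y ^ k) ^ (L - 1)) * 2 ^ (L - 1)" using cC by simp
    finally have eq: "card {w\<in>Ts \<times> Bs. P Y w} = L * (card Y ^ k * (m ^ k - card Y ^ k) ^ (L - 1)) * 2 ^ (L - 1)" .
    show ?thesis unfolding eq cOm by (rule per_Y_ratio[OF m1 w1 w2 wm hk k10 L1 L2])
  qed
  have thW': "th \<le> (1/25 - 1/100) * real (card Win)"
  proof -
    have "th \<le> (3/100) * (h * 2^m / (16 * sqrt m))" by (rule thW)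
    also have "\<dots> \<le> (3/100) * real (card Win)" using Wbig by simp
    finally show ?thesis by simp
  qed
  have RM: "real (card {w\<in>Ts \<times> Bs. th \<le> real (card {Y\<in>Win. P Y w})}) \<ge> (1/100) * real (card (Ts \<times> Bs))"
    by (rule rev_markov[OF _ fW Wne each th0 thW']) (use fT fB in auto)
  have gc: "good_count n m eps L A T b beta = card {Y\<in>Win. P Y (T, b)}" for T b
    unfolding good_count_def Win_def P_def C_def hdef by (rule arg_cong[of _ _ card]) auto
  have setq: "{w \<in> Ts \<times> Bs. (A, fst w, snd w) \<in> {(A, T, b). th \<le> real (good_count n m eps L A T b beta)}}
      = {w\<in>Ts \<times> Bs. th \<le> real (card {Y\<in>Win. P Y w})}"
    by (auto simp: gc)
  have "measure_pmf.prob (bind_pmf (talagrand_pmf ({..<n} - A) k L)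
           (\<lambda>T. bind_pmf (pmf_of_set Bs) (\<lambda>b. return_pmf (A, T, b))))
           {(A, T, b). th \<le> real (good_count n m eps L A T b beta)}
        = real (card {w\<in>Ts \<times> Bs. th \<le> real (card {Y\<in>Win. P Y w})}) / real (card (Ts \<times> Bs))"
    unfolding tal inner_prob[OF fT fB] setq by (rule refl)
  also have "\<dots> \<ge> 1/100" using RM Ompos by (simp add: field_simps)
  finally show ?thesis unfolding Bs_def .
qed

lemma main_param:
  fixes n :: nat and eps :: real and a m k :: nat
  assumes n1: "1 \<le> n" and e1: "100 / sqrt (real n) \<le> eps" and e2: "eps < 1"
    and adef: "real a = sqrt (real n) / eps" and mdef: "m = n - a" and kdef: "real k = sqrt (real m) / eps"
  shows "let L = nat \<lfloor>0.1 * 2 powr (real k)\<rfloor> in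
        measure_pmf.prob (ATb_pmf n a k L)
          {(A, T, b). real (good_count n m eps L A T b True) \<ge> 1/20000 * eps * 2 ^ m} \<ge> 0.01
      \<and> measure_pmf.prob (ATb_pmf n a k L)
          {(A, T, b). real (good_count n m eps L A T b False) \<ge> 1/20000 * eps * 2 ^ m} \<ge> 0.01"
proof -
  have sn: "sqrt (real n) > 0" using n1 by simp
  have "100 / sqrt (real n) > 0" using sn by simp
  hence epos: "eps > 0" using e1 by linarith
  define u where "u = eps * sqrt (real n)"
  have u100: "u \<ge> 100" using e1 sn unfolding u_def by (simp add: field_simps)
  have nn: "sqrt (real n) * sqrt (real n) = real n" by simp
  have aeq: "real a = real n / u" unfolding adef u_def using sn epos nn
    by (simp add: field_simps)
  have an: "a \<le> n"
  proof -
    have "real n * 1 \<le> real n * u" using u100 by (intro mult_left_mono) auto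
    hence "real n / u \<le> real n" using u100 by (simp add: divide_le_eq)
    thus ?thesis using aeq by simp
  qed
  have mreal: "real m = real n - real n / u" using an aeq mdef by (simp add: of_nat_diff)
  have e2m: "eps^2 * real m = u^2 - u"
  proof -
    have "eps^2 * real n = u^2" unfolding u_def by (simp add: power_mult_distrib)
    moreover have "eps^2 * (real n / u) = u"
      using u100 calculation by (simp add: field_simps power2_eq_square)
    ultimately show ?thesis unfolding mreal by (simp add: algebra_simps)
  qed
  have big: "eps^2 * real m \<ge> 9900"
  proof -
    have "100 * 99 \<le> u * (u - 1)" using u100 by (intro mult_mono) auto
    thus ?thesis using e2m by (simp add: power2_eq_square algebra_simps)
  qed
  have e21: "eps^2 \<le> 1" using epos e2 by (simp add: power_le_one)
  have "eps^2 * real m \<le> real m" using e21 by (simp add: mult_left_le_one_le)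
  hence m9900: "real m \<ge> 9900" using big by linarith
  hence m1: "m \<ge> 1" by simp
  define h where "h = 0.05 * eps * sqrt (real m)"
  have smp: "sqrt (real m) > 0" using m1 by simp
  have hpos: "h \<ge> 0" unfolding h_def using epos by simp
  have h2eq: "400 * h^2 = eps^2 * real m" unfolding h_def by (simp add: power2_eq_square power_mult_distrib)
  have hm: "400 * h^2 \<le> real m" using h2eq \<open>eps^2 * real m \<le> real m\<close> by simp
  have h2: "h \<ge> 2"
  proof (rule ccontr)
    assume "\<not> h \<ge> 2"
    hence "h^2 < 2^2" using hpos by (intro power_strict_mono) auto
    thus False using h2eq big by simp
  qed
  have hk: "2 * h * k \<le> real m / 10"
  proof -
    have "2 * h * real k = 0.1 * (sqrt (real m) * sqrt (real m))" unfolding h_def kdef using epos by simp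
    thus ?thesis by simp
  qed
  have k10: "k \<ge> 10"
  proof -
    have "sqrt (9801::real) \<le> sqrt (real m)" by (rule real_sqrt_le_mono) (use m9900 in simp)
    moreover have "sqrt (9801::real) = 99" by (simp add: real_sqrt_unique)
    moreover have "sqrt (real m) / eps \<ge> sqrt (real m)" using epos e2 smp by (simp add: field_simps)
    ultimately have "real k \<ge> 10" using kdef by simp
    thus ?thesis by simp
  qed
  define L where "L = nat \<lfloor>0.1 * 2 powr (real k)\<rfloor>"
  have pw: "(2::real) powr real k = 2^k" by (simp add: powr_realpow)
  have L1: "(1/10) * 2^k - 1 \<le> real L" and L2: "real L \<le> (1/10) * 2^k"
  proof -
    define v :: real where "v = 0.1 * 2^k"
    have v0: "v \<ge> 0" unfolding v_def by simp
    have "real L = real_of_int \<lfloor>v\<rfloor>" unfolding L_def pw v_def using v0 by simp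
    thus "(1/10) * 2^k - 1 \<le> real L" "real L \<le> (1/10) * 2^k" unfolding v_def by linarith+
  qed
  define th where "th = 1/20000 * eps * 2 ^ m"
  have th0: "th \<ge> 0" unfolding th_def using epos by simp
  have thW: "th \<le> (3/100) * (h * 2^m / (16 * sqrt m))"
  proof -
    have "h * 2^m / (16 * sqrt m) = 0.05 * eps * 2^m / 16" unfolding h_def using smp by (simp add: field_simps)
    hence "(3/100) * (h * 2^m / (16 * sqrt m)) = (3/32000) * (eps * 2^m)" by simp
    moreover have "eps * 2^m \<ge> 0" using epos by simp
    ultimately show ?thesis unfolding th_def by linarith
  qed
  define As where "As = {A. A \<subseteq> {..<n} \<and> card A = a}"
  have fAs: "finite As" unfolding As_def by (rule finite_subset[of _ "Pow {..<n}"]) auto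
  have neAs: "As \<noteq> {}" unfolding As_def using an by (auto intro!: exI[of _ "{..<a}"])
  have one: "measure_pmf.prob (ATb_pmf n a k L)
          {(A, T, b). real (good_count n m eps L A T b beta) \<ge> 1/20000 * eps * 2 ^ m} \<ge> 0.01" for beta
  proof -
    have "measure_pmf.prob (ATb_pmf n a k L)
          {(A, T, b). th \<le> real (good_count n m eps L A T b beta)} \<ge> 1/100"
      unfolding ATb_pmf_def As_def[symmetric]
    proof (rule bind_prob_ge)
      fix A assume "A \<in> set_pmf (pmf_of_set As)"
      hence A: "A \<subseteq> {..<n}" "card A = a" using fAs neAs unfolding As_def by auto
      show "measure_pmf.prob (talagrand_pmf ({..<n} - A) k L \<bind>
             (\<lambda>T. pmf_of_set (PiE {..<L} (\<lambda>_. UNIV)) \<bind> (\<lambda>b. return_pmf (A, T, b))))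
             {(A, T, b). th \<le> real (good_count n m eps L A T b beta)} \<ge> 1/100"
        by (rule main_A[OF A mdef m1 h_def h2 hm hk k10 L1 L2 th0 thW])
    qed simp
    thus ?thesis unfolding th_def by simp
  qed
  from one[of True] one[of False] have
    "measure_pmf.prob (ATb_pmf n a k L)
          {(A, T, b). real (good_count n m eps L A T b True) \<ge> 1/20000 * eps * 2 ^ m} \<ge> 0.01
      \<and> measure_pmf.prob (ATb_pmf n a k L)
          {(A, T, b). real (good_count n m eps L A T b False) \<ge> 1/20000 * eps * 2 ^ m} \<ge> 0.01" by simp
  thus ?thesis unfolding Let_def L_def by simp
qed

theorem mainTheorem6:
  shows "\<exists>\<delta>::real. \<delta> > 0 \<and> (\<exists>c0::real. c0 > 0 \<and> (\<exists>N::nat.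
    \<forall>n::nat. \<forall>eps::real. \<forall>a m k :: nat.
      n \<ge> N \<longrightarrow> c0 / sqrt (real n) \<le> eps \<longrightarrow> eps < 1 \<longrightarrow>
      real a = sqrt (real n) / eps \<longrightarrow> m = n - a \<longrightarrow>
      real k = sqrt (real m) / eps \<longrightarrow>
      (let L = nat \<lfloor>0.1 * 2 powr (real k)\<rfloor> in
        measure_pmf.prob (ATb_pmf n a k L)
          {(A, T, b). real (good_count n m eps L A T b True) \<ge> \<delta> * eps * 2 ^ m} \<ge> 0.01
      \<and> measure_pmf.prob (ATb_pmf n a k L)
          {(A, T, b). real (good_count n m eps L A T b False) \<ge> \<delta> * eps * 2 ^ m} \<ge> 0.01)))"
  apply (rule exI[of _ "1/20000"], rule conjI, simp)
  apply (rule exI[of _ "100"], rule conjI, simp)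
  apply (rule exI[of _ "1::nat"])
  apply (intro allI impI)
  apply (rule main_param)
  apply assumption+
  done

end
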